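(* Let $L>0$, let $P\in H^2(0,L)$ be real-valued with $P(x)\ge P^0>0$ on $[0,L]$, and let $\theta_1,\dots,\theta_4\in\mathbb R$. Suppose there are constants $a,b>0$ with $(a+b-1)^2<4ab$ such that $\theta_1=\theta_3/b-a$, $\theta_2=\theta_4/b$, and suppose $\theta_1,\theta_3<0$, $\theta_2,\theta_4>0$. Let $\mathcal H=\{(w,v,\xi,\psi): w\in H^2(0,L),\ v\in H^1(0,L),\ \xi=v(L),\ \psi=v(0)\}$, $F[w,v]=\theta_1v(0)+\theta_2v'(0)+\theta_3w(0)+\theta_4w'(0)$, and $A(w,v,\xi,\psi)=(v,(Pw')',-w'(L),F[w,v])$ with domain $$D(A)=\{(w,v,\xi,\psi): w\in H^3(0,L),\ v\in H^2(0,L),\ \xi=v(L),\ \psi=v(0),\ (Pw')'(L)=-w'(L),\ (Pw')'(0)=F[w,v]\}.$$ Set $\alpha_1=\theta_2/(2P(0))$, $\alpha_2=-\theta_2\theta_3/(2\theta_4)$, and for $\gamma>0$ equip $\mathcal H$ with the inner product $$\begin{aligned}\langle z_1,z_2\rangle_{\mathcal H}:={}&\alpha_1\int_0^L\big[\gamma (Pw_1')'(P\bar w_2')'+Pw_1'\bar w_2'\big]\,dx+\alpha_1\gamma P(L)w_1'(L)\bar w_2'(L)+\alpha_2 w_1(0)\bar w_2(0)\\&+\alpha_1\int_0^L\big(\gamma P v_1'\bar v_2'+v_1\bar v_2\big)\,dx+\alpha_1P(L)\xi_1\bar\xi_2+\alpha_2\gamma\psi_1\bar\psi_2\\&+\tfrac12\big(\psi_1-2\alpha_1P(0)w_1'(0)+2\alpha_2w_1(0)\big)\big(\bar\psi_2-2\alpha_1P(0)\bar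 w_2'(0)+2\alpha_2\bar w_2(0)\big).\end{aligned}$$ Then for all sufficiently small $\gamma>0$ the operator $A$ is dissipative with respect to $\langle\cdot,\cdot\rangle_{\mathcal H}$, i.e. $\operatorname{Re}\langle z,Az\rangle_{\mathcal H}\le0$ for all $z\in D(A)$.
   Context: Prime denotes $d/dx$; functions are complex-valued and a bar denotes complex conjugation. *)

theory Defs
  imports "HOL-Analysis.Analysis"
begin

definition sq_integrable_on :: "(real \<Rightarrow> 'a::euclidean_space) \<Rightarrow> real \<Rightarrow> bool" where
  "sq_integrable_on g L \<longleftrightarrow>
     g measurable_on {0..L} \<and> (\<lambda>x. (norm (g x))\<^sup>2) integrable_on {0..L}"

text \<open>H1 L f g: f (a pointwise representative on [0,L]) lies in the Sobolev space H^1(0,L)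
  and g is (a representative of) its weak derivative: g is square integrable and
  f is the indefinite integral of g on [0,L].\<close>
definition H1 :: "real \<Rightarrow> (real \<Rightarrow> 'a::euclidean_space) \<Rightarrow> (real \<Rightarrow> 'a) \<Rightarrow> bool" where
  "H1 L f g \<longleftrightarrow> sq_integrable_on g L \<and>
     (\<forall>x\<in>{0..L}. f x = f 0 + integral {0..x} g)"

definition H2 :: "real \<Rightarrow> (real \<Rightarrow> 'a::euclidean_space) \<Rightarrow> bool" where
  "H2 L f \<longleftrightarrow> (\<exists>f1 f2. H1 L f f1 \<and> H1 L f1 f2)"

definition H3 :: "real \<Rightarrow> (real \<Rightarrow> 'a::euclidean_space) \<Rightarrow> bool" where
  "H3 L f \<longleftrightarrow> (\<exists>f1 f2 f3. H1 L f f1 \<and> H1 L f1 f2 \<and> H1 L f2 f3)"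

text \<open>Data of an element z = (w,v,xi,psi) of the state space needed to evaluate the
  inner product: (w, w', (P w')', v, v', xi, psi).\<close>
type_synonym hdata =
  "(real \<Rightarrow> complex) \<times> (real \<Rightarrow> complex) \<times> (real \<Rightarrow> complex) \<times>
   (real \<Rightarrow> complex) \<times> (real \<Rightarrow> complex) \<times> complex \<times> complex"

definition ipH :: "real \<Rightarrow> (real \<Rightarrow> real) \<Rightarrow> real \<Rightarrow> real \<Rightarrow> real \<Rightarrow> hdata \<Rightarrow> hdata \<Rightarrow> complex" where
  "ipH L P a1 a2 \<gamma> z1 z2 = (case z1 of (w1, dw1, pw1, v1, dv1, \<xi>1, \<psi>1) \<Rightarrow>
     case z2 of (w2, dw2, pw2, v2, dv2, \<xi>2, \<psi>2) \<Rightarrow>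
       of_real a1 * integral {0..L} (\<lambda>x. of_real \<gamma> * pw1 x * cnj (pw2 x)
                                        + of_real (P x) * dw1 x * cnj (dw2 x))
     + of_real (a1 * \<gamma> * P L) * dw1 L * cnj (dw2 L)
     + of_real a2 * w1 0 * cnj (w2 0)
     + of_real a1 * integral {0..L} (\<lambda>x. of_real (\<gamma> * P x) * dv1 x * cnj (dv2 x)
                                        + v1 x * cnj (v2 x))
     + of_real (a1 * P L) * \<xi>1 * cnj \<xi>2
     + of_real (a2 * \<gamma>) * \<psi>1 * cnj \<psi>2
     + (1/2) * (\<psi>1 - of_real (2 * a1 * P 0) * dw1 0 + of_real (2 * a2) * w1 0)
             * cnj (\<psi>2 - of_real (2 * a1 * P 0) * dw2 0 + of_real (2 * a2) * w2 0))"

definition Ffb :: "real \<Rightarrow> real \<Rightarrow> real \<Rightarrow> real \<Rightarrow> complex \<Rightarrow> complex \<Rightarrow> complex \<Rightarrow> complex \<Rightarrow> complex" where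
  "Ffb t1 t2 t3 t4 v0 dv0 w0 dw0 =
     of_real t1 * v0 + of_real t2 * dv0 + of_real t3 * w0 + of_real t4 * dw0"

end

theory Submission
  imports Defs
begin


lemma sigma_finite_lebesgue: "sigma_finite_measure (lebesgue :: real measure)"
proof
  obtain A :: "real set set" where A: "countable A" "A \<subseteq> sets lborel" "\<Union>A = space lborel" "\<forall>a\<in>A. emeasure lborel a \<noteq> \<infinity>"
    using lborel.sigma_finite_countable by blast
  show "\<exists>A::real set set. countable A \<and> A \<subseteq> sets lebesgue \<and> \<Union>A = space lebesgue \<and> (\<forall>a\<in>A. emeasure lebesgue a \<noteq> \<infinity>)"
    using A by (intro exI[of _ A]) auto
qed

interpretation leb_pair: pair_sigma_finite "lebesgue :: real measure" "lebesgue :: real measure"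
  by (simp add: pair_sigma_finite.intro sigma_finite_lebesgue)

lemma id_leb_meas: "(\<lambda>x::real. x) \<in> borel_measurable lebesgue"
  by (rule measurable_completion) simp

lemma fst_leb_meas: "fst \<in> borel_measurable ((lebesgue :: real measure) \<Otimes>\<^sub>M (lebesgue :: real measure))"
  using measurable_compose[OF measurable_fst id_leb_meas] by blast

lemma snd_leb_meas: "snd \<in> borel_measurable ((lebesgue :: real measure) \<Otimes>\<^sub>M (lebesgue :: real measure))"
  using measurable_compose[OF measurable_snd[of "lebesgue::real measure" "lebesgue::real measure"] id_leb_meas] by blast

lemma pred_le_leb: "Measurable.pred ((lebesgue :: real measure) \<Otimes>\<^sub>M (lebesgue :: real measure)) (\<lambda>p. fst p \<le> snd p)"
  using borel_measurable_le fst_leb_meas snd_leb_meas by (simp add: pred_def)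

lemma absint_cont_mult:
  fixes f' F :: "real \<Rightarrow> complex"
  assumes "f' absolutely_integrable_on {a..b}" "continuous_on {a..b} F"
  shows "(\<lambda>x. f' x * F x) absolutely_integrable_on {a..b}"
proof -
  have "(\<lambda>x. F x * f' x) absolutely_integrable_on {a..b}"
  proof (rule absolutely_integrable_bounded_measurable_product[OF bilinear_times])
    show "F \<in> borel_measurable (lebesgue_on {a..b})"
      using assms(2) by (simp add: continuous_imp_measurable_on_sets_lebesgue)
    show "bounded (F ` {a..b})"
      using assms(2) by (simp add: compact_continuous_image compact_imp_bounded)
  qed (use assms in auto)
  then show ?thesis by (simp add: mult.commute)
qed

lemma fubini_tri:
  fixes f' g' :: "real \<Rightarrow> complex"
  assumes L: "0 \<le> L" and f: "f' absolutely_integrable_on {0..L}" and g: "g' absolutely_integrable_on {0..L}"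
  shows "integral {0..L} (\<lambda>x. f' x * integral {0..x} g') = integral {0..L} (\<lambda>t. g' t * integral {t..L} f')"
proof -
  define h1 where "h1 = (\<lambda>x. indicator {0..L} x *\<^sub>R f' x)"
  define h2 where "h2 = (\<lambda>x. indicator {0..L} x *\<^sub>R g' x)"
  have i1: "integrable lebesgue h1" using f unfolding set_integrable_def h1_def .
  have i2: "integrable lebesgue h2" using g unfolding set_integrable_def h2_def .
  have m1[measurable]: "h1 \<in> borel_measurable lebesgue" using i1 by auto
  have m2[measurable]: "h2 \<in> borel_measurable lebesgue" using i2 by auto
  note pred_le_leb[measurable] fst_leb_meas[measurable] snd_leb_meas[measurable]
  define k where "k = (\<lambda>(t::real) (x::real). if t \<le> x then h2 t * h1 x else 0)"
  have km: "case_prod k \<in> borel_measurable ((lebesgue :: real measure) \<Otimes>\<^sub>M (lebesgue :: real measure))"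
    unfolding k_def by measurable
  define D where "D = (\<lambda>p::real\<times>real. norm (h2 (fst p)) * norm (h1 (snd p)))"
  have Dm: "D \<in> borel_measurable ((lebesgue :: real measure) \<Otimes>\<^sub>M (lebesgue :: real measure))"
    unfolding D_def by measurable
  have Dint: "integrable ((lebesgue :: real measure) \<Otimes>\<^sub>M (lebesgue :: real measure)) D"
  proof (rule leb_pair.Fubini_integrable[OF Dm])
    have "(\<lambda>t. \<integral>x. norm (D (t, x)) \<partial>lebesgue) = (\<lambda>t. norm (h2 t) * (\<integral>x. norm (h1 x) \<partial>lebesgue))"
      by (simp add: D_def abs_mult)
    then show "integrable lebesgue (\<lambda>t. \<integral>x. norm (D (t, x)) \<partial>lebesgue)"
      using i2 by (simp add: integrable_norm)
    show "AE t in lebesgue. integrable lebesgue (\<lambda>x. D (t, x))"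
      using i1 by (simp add: D_def integrable_norm)
  qed
  have kint: "integrable ((lebesgue :: real measure) \<Otimes>\<^sub>M (lebesgue :: real measure)) (case_prod k)"
    by (rule Bochner_Integration.integrable_bound[OF Dint km]) (auto simp: k_def D_def norm_mult)
  have fub: "(\<integral>x. (\<integral>t. k t x \<partial>lebesgue) \<partial>lebesgue) = (\<integral>t. (\<integral>x. k t x \<partial>lebesgue) \<partial>lebesgue)"
    by (rule leb_pair.Fubini_integral[OF kint])
  have gsub: "set_integrable lebesgue {0..x} g'" if "x \<le> L" for x
    by (rule set_integrable_subset[OF g]) (use that in auto)
  have fsub: "set_integrable lebesgue {t..L} f'" if "0 \<le> t" for t
    by (rule set_integrable_subset[OF f]) (use that in auto)
  have inner1: "(\<integral>t. k t x \<partial>lebesgue) = indicator {0..L} x *\<^sub>R (f' x * integral {0..x} g')" for x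
  proof (cases "x \<in> {0..L}")
    case True
    have "(\<lambda>t. k t x) = (\<lambda>t. (indicator {0..x} t *\<^sub>R g' t) * f' x)"
      using True by (auto simp: k_def h1_def h2_def indicator_def fun_eq_iff)
    then have "(\<integral>t. k t x \<partial>lebesgue) = (\<integral>t. (indicator {0..x} t *\<^sub>R g' t) * f' x \<partial>lebesgue)"
      by simp
    also have "\<dots> = (LINT t:{0..x}|lebesgue. g' t) * f' x"
      unfolding set_lebesgue_integral_def by (rule integral_mult_left_zero)
    also have "\<dots> = integral {0..x} g' * f' x"
      using gsub[of x] True by (simp add: set_lebesgue_integral_eq_integral(2))
    finally show ?thesis using True by (simp add: mult.commute)
  next
    case False
    then have "(\<lambda>t. k t x) = (\<lambda>t. 0)" by (auto simp: k_def h1_def fun_eq_iff)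
    then show ?thesis using False by simp
  qed
  have inner2: "(\<integral>x. k t x \<partial>lebesgue) = indicator {0..L} t *\<^sub>R (g' t * integral {t..L} f')" for t
  proof (cases "t \<in> {0..L}")
    case True
    have "(\<lambda>x. k t x) = (\<lambda>x. g' t * (indicator {t..L} x *\<^sub>R f' x))"
      using True by (auto simp: k_def h1_def h2_def indicator_def fun_eq_iff)
    then have "(\<integral>x. k t x \<partial>lebesgue) = (\<integral>x. g' t * (indicator {t..L} x *\<^sub>R f' x) \<partial>lebesgue)"
      by simp
    also have "\<dots> = g' t * (LINT x:{t..L}|lebesgue. f' x)"
      unfolding set_lebesgue_integral_def by (rule integral_mult_right_zero)
    also have "\<dots> = g' t * integral {t..L} f'"
      using fsub[of t] True by (simp add: set_lebesgue_integral_eq_integral(2))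
    finally show ?thesis using True by simp
  next
    case False
    then have "(\<lambda>x. k t x) = (\<lambda>x. 0)" by (auto simp: k_def h2_def fun_eq_iff)
    then show ?thesis using False by simp
  qed
  have c1: "continuous_on {0..L} (\<lambda>x. integral {0..x} g')"
    by (rule indefinite_integral_continuous_1) (use g in \<open>simp add: set_lebesgue_integral_eq_integral(1)\<close>)
  have c2: "continuous_on {0..L} (\<lambda>t. integral {t..L} f')"
    by (rule indefinite_integral_continuous_1') (use f in \<open>simp add: set_lebesgue_integral_eq_integral(1)\<close>)
  have a1: "(\<lambda>x. f' x * integral {0..x} g') absolutely_integrable_on {0..L}"
    by (rule absint_cont_mult[OF f c1])
  have a2: "(\<lambda>t. g' t * integral {t..L} f') absolutely_integrable_on {0..L}"
    by (rule absint_cont_mult[OF g c2])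
  have "integral {0..L} (\<lambda>x. f' x * integral {0..x} g') = (\<integral>x. (\<integral>t. k t x \<partial>lebesgue) \<partial>lebesgue)"
    using set_lebesgue_integral_eq_integral(2)[OF a1] by (simp add: inner1 set_lebesgue_integral_def)
  also have "\<dots> = (\<integral>t. (\<integral>x. k t x \<partial>lebesgue) \<partial>lebesgue)" by (rule fub)
  also have "\<dots> = integral {0..L} (\<lambda>t. g' t * integral {t..L} f')"
    using set_lebesgue_integral_eq_integral(2)[OF a2] by (simp add: inner2 set_lebesgue_integral_def)
  finally show ?thesis .
qed

lemma ibp:
  fixes f g f' g' :: "real \<Rightarrow> complex"
  assumes L: "0 \<le> L" and f: "f' absolutely_integrable_on {0..L}" and g: "g' absolutely_integrable_on {0..L}"
    and hf: "\<forall>x\<in>{0..L}. f x = f 0 + integral {0..x} f'"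
    and hg: "\<forall>x\<in>{0..L}. g x = g 0 + integral {0..x} g'"
  shows "((\<lambda>x. f' x * g x + f x * g' x) has_integral (f L * g L - f 0 * g 0)) {0..L}"
proof -
  have fi: "f' integrable_on {0..L}" using f by (simp add: set_lebesgue_integral_eq_integral(1))
  have gi: "g' integrable_on {0..L}" using g by (simp add: set_lebesgue_integral_eq_integral(1))
  have c1: "continuous_on {0..L} (\<lambda>x. integral {0..x} g')"
    by (rule indefinite_integral_continuous_1[OF gi])
  have c2: "continuous_on {0..L} (\<lambda>t. integral {t..L} f')"
    by (rule indefinite_integral_continuous_1'[OF fi])
  define J where "J = integral {0..L} (\<lambda>x. f' x * integral {0..x} g')"
  have A: "((\<lambda>x. f' x * integral {0..x} g') has_integral J) {0..L}"
    unfolding J_def using absint_cont_mult[OF f c1]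
    by (simp add: set_lebesgue_integral_eq_integral(1) integrable_integral)
  have B: "((\<lambda>t. g' t * integral {t..L} f') has_integral J) {0..L}"
    unfolding J_def fubini_tri[OF L f g] using absint_cont_mult[OF g c2]
    by (simp add: set_lebesgue_integral_eq_integral(1) integrable_integral)
  have fL: "f L = f 0 + integral {0..L} f'" by (rule hf[rule_format]) (use L in auto)
  have gL: "g L = g 0 + integral {0..L} g'" by (rule hg[rule_format]) (use L in auto)
  have F1: "(f' has_integral (f L - f 0)) {0..L}"
    unfolding fL using fi by (simp add: integrable_integral)
  have G1: "(g' has_integral (g L - g 0)) {0..L}"
    unfolding gL using gi by (simp add: integrable_integral)
  have tl: "integral {t..L} f' = f L - f t" if "t \<in> {0..L}" for t
  proof -
    have "integral {0..t} f' + integral {t..L} f' = integral {0..L} f'"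
      using that fi by (intro Henstock_Kurzweil_Integration.integral_combine) auto
    moreover have "f t = f 0 + integral {0..t} f'" by (rule hf[rule_format, OF that])
    ultimately show ?thesis using fL by (simp add: algebra_simps)
  qed
  have S: "((\<lambda>x. (f' x * g 0 + f' x * integral {0..x} g') + (g' x * f L - g' x * integral {x..L} f'))
      has_integral ((f L - f 0) * g 0 + J + ((g L - g 0) * f L - J))) {0..L}"
    by (intro has_integral_add has_integral_diff has_integral_mult_left has_integral_mult_right A B F1 G1)
  have val: "(f L - f 0) * g 0 + J + ((g L - g 0) * f L - J) = f L * g L - f 0 * g 0"
    by (simp add: algebra_simps)
  show ?thesis
  proof (rule has_integral_eq[OF _ S[unfolded val]])
    fix x assume x: "x \<in> {0..L}"
    show "(f' x * g 0 + f' x * integral {0..x} g') + (g' x * f L - g' x * integral {x..L} f') = f' x * g x + f x * g' x"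
      unfolding hg[rule_format, OF x] tl[OF x] by (simp add: algebra_simps)
  qed
qed




lemma psd2: fixes d1 d2 e u x :: real assumes "d1 > 0" "4 * d1 * d2 \<ge> e^2"
  shows "d1 * u^2 - e * u * x + d2 * x^2 \<ge> 0"
proof -
  have "4 * d1 * (d1 * u^2 - e * u * x + d2 * x^2) = (2 * d1 * u - e * x)^2 + (4 * d1 * d2 - e^2) * x^2"
    by (simp add: algebra_simps power2_eq_square)
  also have "\<dots> \<ge> 0" using assms by (intro add_nonneg_nonneg mult_nonneg_nonneg) auto
  finally show ?thesis using assms(1)
    by (simp add: zero_le_mult_iff)
qed

lemma quad_neg:
  fixes a b :: real assumes "a > 0" "b > 0" "(a + b - 1)^2 < 4 * a * b"
  shows "\<exists>\<gamma>0>0. \<forall>\<gamma>. 0 < \<gamma> \<and> \<gamma> < \<gamma>0 \<longrightarrow>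
     (\<forall>v x y. -1/2* v^2 + (b-a+1)/2 * x* v - b/2 * x^2 + \<gamma>/2 * (- (y^2) + ((b-a)* v - b * x) * y) \<le> (0::real))"
proof -
  define B where "B = (b-a+1)/2"
  have hB: "B^2 < b" using assms(3) unfolding B_def by (simp add: power2_eq_square algebra_simps)
  define c where "c = (b - B^2)/(2 * (1+b))"
  have c0: "c > 0" using hB assms by (simp add: c_def)
  have c1: "c < 1/2"
  proof -
    have "B^2 \<ge> 0" by simp
    then show ?thesis using assms unfolding c_def by (simp add: divide_simps) (smt (verit) \<open>B^2 \<ge> 0\<close>)
  qed
  have cdet: "4 * (1/2 - c) * (b/2 - c) \<ge> B^2"
  proof -
    have "c * (2 * (1+b)) = b - B^2" unfolding c_def using assms by (simp add: field_simps)
    moreover have "c^2 \<ge> 0" by simp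
    ultimately show ?thesis by (simp add: algebra_simps power2_eq_square) 
  qed
  define M where "M = (b-a)^2 + b^2 + 1"
  have M0: "M > 0" unfolding M_def by (simp add: add_nonneg_pos)
  show ?thesis
  proof (intro exI[of _ "4 * c/M"] conjI allI impI)
    show "4 * c/M > 0" using c0 M0 by simp
    fix \<gamma> v x y :: real assume g: "0 < \<gamma> \<and> \<gamma> < 4 * c/M"
    have gM: "\<gamma> * M \<le> 4 * c" using g M0 by (simp add: field_simps)
    have "(1/2 - c) * v^2 - B * v * x + (b/2 - c) * x^2 \<ge> 0"
      by (rule psd2) (use c1 cdet in auto)
    then have q: "-1/2 * v^2 + B * x * v - b/2 * x^2 \<le> -c * (v^2 + x^2)"
      by (simp add: algebra_simps)
    have y1: "(b-a) * v * y \<le> y^2/2 + (b-a)^2 * v^2/2"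
    proof -
      have "0 \<le> (y - (b-a) * v)^2/2" by simp
      then show ?thesis by (simp add: power2_eq_square field_simps)
    qed
    have y2: "-(b * x * y) \<le> y^2/2 + b^2 * x^2/2"
    proof -
      have "0 \<le> (y + b * x)^2/2" by simp
      then show ?thesis by (simp add: power2_eq_square field_simps)
    qed
    have "- (y^2) + ((b-a)* v - b * x) * y \<le> ((b-a)^2* v^2 + b^2 * x^2)/2"
      using y1 y2 by (simp add: algebra_simps)
    also have "\<dots> \<le> M * (v^2+x^2)/2"
      unfolding M_def by (simp add: algebra_simps)
    finally have "\<gamma>/2 * (- (y^2) + ((b-a)* v - b * x) * y) \<le> \<gamma>/2 * (M * (v^2+x^2)/2)"
      using g by (intro mult_left_mono) auto
    also have "\<dots> = (\<gamma> * M) * (v^2+x^2)/4" by simp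
    also have "\<dots> \<le> (4 * c) * (v^2+x^2)/4"
      using gM by (intro divide_right_mono mult_right_mono) auto
    finally show "-1/2* v^2 + (b-a+1)/2 * x* v - b/2 * x^2 + \<gamma>/2 * (- (y^2) + ((b-a)* v - b * x) * y) \<le> 0"
      using q unfolding B_def by simp
  qed
qed

lemma final_alg:
  fixes v0 d w0 e vL wL dL F :: complex and a b a1 a2 P0 PL \<gamma> t1 t2 t3 t4 :: real
  assumes quad: "\<forall>v x y. -1/2 * v^2 + (b-a+1)/2 * x * v - b/2 * x^2 + \<gamma>/2 * (- (y^2) + ((b-a) * v - b * x) * y) \<le> (0::real)"
    and ht: "t1 = -2 * a2 - a" "t2 = 2 * a1 * P0" "t3 = -2 * b * a2" "t4 = 2 * b * a1 * P0"
    and hF: "F = of_real t1 * v0 + of_real t2 * d + of_real t3 * w0 + of_real t4 * e"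
  shows "a1 * (\<gamma> * Re((-wL) * cnj(of_real PL * dL) - F * cnj(of_real P0 * d)) + Re(vL * cnj(of_real PL * wL) - v0 * cnj(of_real P0 * e)))
 + Re(of_real (a1 * \<gamma> * PL) * wL * cnj dL) + Re(of_real a2 * w0 * cnj v0) + Re(of_real (a1 * PL) * vL * cnj (-wL)) + Re(of_real (a2 * \<gamma>) * v0 * cnj F)
 + Re((1/2) * (v0 - of_real(2 * a1 * P0) * e + of_real(2 * a2) * w0) * cnj(F - of_real(2 * a1 * P0) * d + of_real(2 * a2) * v0)) \<le> 0" (is "?L \<le> 0")
proof -
  define X where "X = v0 - of_real(2 * a1 * P0) * e + of_real(2 * a2) * w0"
  define Y where "Y = - of_real(2 * a1 * P0) * d + of_real(2 * a2) * v0"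
  have q1: "-1/2 * (Re v0)^2 + (b-a+1)/2 * Re X * Re v0 - b/2 * (Re X)^2 + \<gamma>/2 * (- ((Re Y)^2) + ((b-a) * Re v0 - b * Re X) * Re Y) \<le> 0"
    using quad by blast
  have q2: "-1/2 * (Im v0)^2 + (b-a+1)/2 * Im X * Im v0 - b/2 * (Im X)^2 + \<gamma>/2 * (- ((Im Y)^2) + ((b-a) * Im v0 - b * Im X) * Im Y) \<le> 0"
    using quad by blast
  have "?L = (-1/2 * (Re v0)^2 + (b-a+1)/2 * Re X * Re v0 - b/2 * (Re X)^2 + \<gamma>/2 * (- ((Re Y)^2) + ((b-a) * Re v0 - b * Re X) * Re Y))
     + (-1/2 * (Im v0)^2 + (b-a+1)/2 * Im X * Im v0 - b/2 * (Im X)^2 + \<gamma>/2 * (- ((Im Y)^2) + ((b-a) * Im v0 - b * Im X) * Im Y))"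
    unfolding hF ht X_def Y_def by (simp add: field_simps power2_eq_square)
  then show ?thesis using add_nonpos_nonpos[OF q1 q2] by simp
qed




lemma sq_absint:
  fixes g :: "real \<Rightarrow> 'a::euclidean_space"
  assumes "sq_integrable_on g L"
  shows "g absolutely_integrable_on {0..L}"
proof (rule measurable_bounded_by_integrable_imp_absolutely_integrable[where g="\<lambda>x. 1 + (norm (g x))^2"])
  show "g \<in> borel_measurable (lebesgue_on {0..L})"
    using assms measurable_on_iff_borel_measurable[of "{0..L}" g] unfolding sq_integrable_on_def by simp
  show "(\<lambda>x. 1 + (norm (g x))^2) integrable_on {0..L}"
    using assms unfolding sq_integrable_on_def by (intro integrable_add integrable_on_const) auto
  show "norm (g x) \<le> 1 + (norm (g x))^2" for x
  proof -
    have "0 \<le> (norm (g x) - 1/2)^2" by simp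
    then show ?thesis by (simp add: power2_eq_square field_simps)
  qed
qed simp

lemma H1_facts:
  fixes f f' :: "real \<Rightarrow> 'a::euclidean_space"
  assumes "H1 L f f'"
  shows "f' absolutely_integrable_on {0..L}" "\<forall>x\<in>{0..L}. f x = f 0 + integral {0..x} f'"
    "continuous_on {0..L} f" "f' integrable_on {0..L}"
proof -
  show ai: "f' absolutely_integrable_on {0..L}" using assms sq_absint unfolding H1_def by blast
  show rep: "\<forall>x\<in>{0..L}. f x = f 0 + integral {0..x} f'" using assms unfolding H1_def by blast
  show fi: "f' integrable_on {0..L}" using ai by (simp add: set_lebesgue_integral_eq_integral(1))
  have "continuous_on {0..L} (\<lambda>x. f 0 + integral {0..x} f')"
    by (intro continuous_on_add continuous_on_const indefinite_integral_continuous_1 fi)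
  then show "continuous_on {0..L} f"
    by (rule continuous_on_eq) (metis rep)
qed

lemma cnj_facts:
  fixes f f' :: "real \<Rightarrow> complex"
  assumes ai: "f' absolutely_integrable_on {0..L}" and rep: "\<forall>x\<in>{0..L}. f x = f 0 + integral {0..x} f'"
  shows "(\<lambda>x. cnj (f' x)) absolutely_integrable_on {0..L}"
    "\<forall>x\<in>{0..L}. cnj (f x) = cnj (f 0) + integral {0..x} (\<lambda>x. cnj (f' x))"
proof -
  show "(\<lambda>x. cnj (f' x)) absolutely_integrable_on {0..L}"
    using ai unfolding absolutely_integrable_on_def by (simp add: integrable_on_cnj_iff)
  show "\<forall>x\<in>{0..L}. cnj (f x) = cnj (f 0) + integral {0..x} (\<lambda>x. cnj (f' x))"
  proof
    fix x assume x: "x \<in> {0..L}"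
    have "f x = f 0 + integral {0..x} f'" using rep x by blast
    then show "cnj (f x) = cnj (f 0) + integral {0..x} (\<lambda>x. cnj (f' x))"
      by (simp add: integral_cnj)
  qed
qed




theorem lemma2p9:
  fixes L P0 a b \<theta>1 \<theta>2 \<theta>3 \<theta>4 :: real and P :: "real \<Rightarrow> real"
  assumes "L > 0"
    and "H2 L P"
    and "P0 > 0" and "\<forall>x\<in>{0..L}. P x \<ge> P0"
    and "a > 0" and "b > 0" and "(a + b - 1)\<^sup>2 < 4 * a * b"
    and "\<theta>1 = \<theta>3 / b - a" and "\<theta>2 = \<theta>4 / b"
    and "\<theta>1 < 0" and "\<theta>3 < 0" and "\<theta>2 > 0" and "\<theta>4 > 0"
  shows "\<exists>\<gamma>0>0. \<forall>\<gamma>. 0 < \<gamma> \<and> \<gamma> < \<gamma>0 \<longrightarrow>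
    (\<forall>(w :: real \<Rightarrow> complex) (v :: real \<Rightarrow> complex) \<xi> \<psi> w1 v1 q1 q2 p1.
       H3 L w \<longrightarrow> H2 L v \<longrightarrow>
       H1 L w w1 \<longrightarrow> H1 L v v1 \<longrightarrow>
       H1 L (\<lambda>x. of_real (P x) * w1 x) q1 \<longrightarrow> H1 L q1 q2 \<longrightarrow>
       H1 L (\<lambda>x. of_real (P x) * v1 x) p1 \<longrightarrow>
       \<xi> = v L \<longrightarrow> \<psi> = v 0 \<longrightarrow>
       q1 L = - w1 L \<longrightarrow>
       q1 0 = Ffb \<theta>1 \<theta>2 \<theta>3 \<theta>4 (v 0) (v1 0) (w 0) (w1 0) \<longrightarrow>
       Re (ipH L P (\<theta>2 / (2 * P 0)) (- \<theta>2 * \<theta>3 / (2 * \<theta>4)) \<gamma>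
             (w, w1, q1, v, v1, \<xi>, \<psi>)
             (v, v1, p1, q1, q2, - w1 L, Ffb \<theta>1 \<theta>2 \<theta>3 \<theta>4 (v 0) (v1 0) (w 0) (w1 0)))
         \<le> 0)"
proof -
  note La = assms(1) and H2P = assms(2) and P0pos = assms(3) and Pge = assms(4)
  note ab = assms(5,6,7) and th = assms(8,9) and ths = assms(10-13)
  obtain \<gamma>0 where g0: "\<gamma>0 > 0" and quad: "\<forall>\<gamma>. 0 < \<gamma> \<and> \<gamma> < \<gamma>0 \<longrightarrow>
     (\<forall>v x y. -1/2 * v^2 + (b-a+1)/2 * x * v - b/2 * x^2 + \<gamma>/2 * (- (y^2) + ((b-a) * v - b * x) * y) \<le> (0::real))"
    using quad_neg[OF ab] by blast
  have L0: "0 \<le> L" using La by simp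
  obtain Pd Pdd where "H1 L P Pd" using H2P unfolding H2_def by blast
  then have Pc: "continuous_on {0..L} P" by (rule H1_facts)
  have Ppos: "P x > 0" if "x \<in> {0..L}" for x using Pge that P0pos by force
  have Pcc: "continuous_on {0..L} (\<lambda>x. complex_of_real (P x))"
    by (intro continuous_intros Pc)
  have t4: "\<theta>4 = b * \<theta>2" using th ab by simp
  show ?thesis
  proof (intro exI[of _ \<gamma>0] conjI allI impI g0)
    fix \<gamma> :: real and w v :: "real \<Rightarrow> complex" and \<xi> \<psi> :: complex and w1 v1 q1 q2 p1 :: "real \<Rightarrow> complex"
    assume g: "0 < \<gamma> \<and> \<gamma> < \<gamma>0"
    assume "H3 L w" "H2 L v" and Hw: "H1 L w w1" and Hv: "H1 L v v1"
      and Hpw: "H1 L (\<lambda>x. of_real (P x) * w1 x) q1" and Hq: "H1 L q1 q2"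
      and Hpv: "H1 L (\<lambda>x. of_real (P x) * v1 x) p1"
      and xi: "\<xi> = v L" and psi: "\<psi> = v 0" and qL: "q1 L = - w1 L"
      and q0: "q1 0 = Ffb \<theta>1 \<theta>2 \<theta>3 \<theta>4 (v 0) (v1 0) (w 0) (w1 0)"
    define PW where "PW = (\<lambda>x. complex_of_real (P x) * w1 x)"
    define PV where "PV = (\<lambda>x. complex_of_real (P x) * v1 x)"
    define Fv where "Fv = Ffb \<theta>1 \<theta>2 \<theta>3 \<theta>4 (v 0) (v1 0) (w 0) (w1 0)"
    note Fv_def[symmetric, simp]
    note fv = H1_facts[OF Hv] and fpw = H1_facts[OF Hpw[folded PW_def]]
      and fq = H1_facts[OF Hq] and fpv = H1_facts[OF Hpv[folded PV_def]]
    have v1c: "continuous_on {0..L} v1"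
    proof -
      have "continuous_on {0..L} (\<lambda>x. PV x / complex_of_real (P x))"
        using Ppos by (intro continuous_on_divide fpv(3) Pcc) (fastforce simp: less_le)
      moreover have "PV x / complex_of_real (P x) = v1 x" if "x \<in> {0..L}" for x
        using Ppos[OF that] by (simp add: PV_def)
      ultimately show ?thesis
        by (rule continuous_on_eq) auto
    qed
    have hA: "((\<lambda>x. q2 x * cnj (PV x) + q1 x * cnj (p1 x)) has_integral (q1 L * cnj (PV L) - q1 0 * cnj (PV 0))) {0..L}"
      by (rule ibp[OF L0 fq(1) cnj_facts(1)[OF fpv(1,2)] fq(2) cnj_facts(2)[OF fpv(1,2)]])
    have hB: "((\<lambda>x. v1 x * cnj (PW x) + v x * cnj (q1 x)) has_integral (v L * cnj (PW L) - v 0 * cnj (PW 0))) {0..L}"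
      by (rule ibp[OF L0 fv(1) cnj_facts(1)[OF fpw(1,2)] fv(2) cnj_facts(2)[OF fpw(1,2)]])
    define int1 where "int1 = (\<lambda>x. of_real \<gamma> * q1 x * cnj (p1 x) + of_real (P x) * w1 x * cnj (v1 x))"
    define int4 where "int4 = (\<lambda>x. of_real (\<gamma> * P x) * v1 x * cnj (q2 x) + v x * cnj (q1 x))"
    have i1: "int1 integrable_on {0..L}"
    proof -
      have "(\<lambda>x. cnj (p1 x) * q1 x) absolutely_integrable_on {0..L}"
        by (rule absint_cont_mult[OF cnj_facts(1)[OF fpv(1,2)] fq(3)])
      then have "(\<lambda>x. of_real \<gamma> * (cnj (p1 x) * q1 x)) integrable_on {0..L}"
        by (intro integrable_on_cmult_left) (simp add: set_lebesgue_integral_eq_integral(1))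
      moreover have "(\<lambda>x. PW x * cnj (v1 x)) integrable_on {0..L}"
        by (intro integrable_continuous_interval continuous_intros fpw(3) v1c)
      moreover have "int1 = (\<lambda>x. of_real \<gamma> * (cnj (p1 x) * q1 x) + PW x * cnj (v1 x))"
        unfolding int1_def PW_def by (simp add: fun_eq_iff algebra_simps)
      ultimately show ?thesis by (simp add: integrable_add)
    qed
    have i4: "int4 integrable_on {0..L}"
    proof -
      have "(\<lambda>x. cnj (q2 x) * PV x) absolutely_integrable_on {0..L}"
        by (rule absint_cont_mult[OF cnj_facts(1)[OF fq(1,2)] fpv(3)])
      then have "(\<lambda>x. of_real \<gamma> * (cnj (q2 x) * PV x)) integrable_on {0..L}"
        by (intro integrable_on_cmult_left) (simp add: set_lebesgue_integral_eq_integral(1))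
      moreover have "(\<lambda>x. v x * cnj (q1 x)) integrable_on {0..L}"
        by (intro integrable_continuous_interval continuous_intros fv(3) fq(3))
      moreover have "int4 = (\<lambda>x. of_real \<gamma> * (cnj (q2 x) * PV x) + v x * cnj (q1 x))"
        unfolding int4_def PV_def by (simp add: fun_eq_iff algebra_simps)
      ultimately show ?thesis by (simp add: integrable_add)
    qed
    define VA where "VA = q1 L * cnj (PV L) - q1 0 * cnj (PV 0)"
    define VB where "VB = v L * cnj (PW L) - v 0 * cnj (PW 0)"
    have rA: "((\<lambda>x. Re (q2 x * cnj (PV x) + q1 x * cnj (p1 x))) has_integral Re VA) {0..L}"
      using has_integral_linear[OF hA bounded_linear_Re] unfolding VA_def by (simp add: o_def)
    have rB: "((\<lambda>x. Re (v1 x * cnj (PW x) + v x * cnj (q1 x))) has_integral Re VB) {0..L}"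
      using has_integral_linear[OF hB bounded_linear_Re] unfolding VB_def by (simp add: o_def)
    have r1: "((\<lambda>x. Re (int1 x)) has_integral Re (integral {0..L} int1)) {0..L}"
      using has_integral_linear[OF integrable_integral[OF i1] bounded_linear_Re] by (simp add: o_def)
    have r4: "((\<lambda>x. Re (int4 x)) has_integral Re (integral {0..L} int4)) {0..L}"
      using has_integral_linear[OF integrable_integral[OF i4] bounded_linear_Re] by (simp add: o_def)
    have s1: "((\<lambda>x. Re (int1 x) + Re (int4 x)) has_integral (Re (integral {0..L} int1) + Re (integral {0..L} int4))) {0..L}"
      by (rule has_integral_add[OF r1 r4])
    have s2: "((\<lambda>x. \<gamma> * Re (q2 x * cnj (PV x) + q1 x * cnj (p1 x)) + Re (v1 x * cnj (PW x) + v x * cnj (q1 x))) has_integral (\<gamma> * Re VA + Re VB)) {0..L}"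
      by (intro has_integral_add has_integral_mult_right rA rB)
    have pw: "\<gamma> * Re (q2 x * cnj (PV x) + q1 x * cnj (p1 x)) + Re (v1 x * cnj (PW x) + v x * cnj (q1 x)) = Re (int1 x) + Re (int4 x)" for x
      by (simp add: int1_def int4_def PV_def PW_def algebra_simps)
    have IE: "Re (integral {0..L} int1) + Re (integral {0..L} int4) = \<gamma> * Re VA + Re VB"
      using has_integral_unique[OF s1 s2[unfolded pw]] .
    define a1 where "a1 = \<theta>2 / (2 * P 0)"
    define a2 where "a2 = - \<theta>2 * \<theta>3 / (2 * \<theta>4)"
    have E0: "Re (ipH L P a1 a2 \<gamma> (w, w1, q1, v, v1, \<xi>, \<psi>) (v, v1, p1, q1, q2, - w1 L, Fv))
      = a1 * (Re (integral {0..L} int1) + Re (integral {0..L} int4))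
        + Re(of_real (a1 * \<gamma> * P L) * w1 L * cnj (v1 L)) + Re(of_real a2 * w 0 * cnj (v 0))
        + Re(of_real (a1 * P L) * v L * cnj (- w1 L)) + Re(of_real (a2 * \<gamma>) * v 0 * cnj Fv)
        + Re((1/2) * (v 0 - of_real(2 * a1 * P 0) * w1 0 + of_real(2 * a2) * w 0) * cnj(Fv - of_real(2 * a1 * P 0) * v1 0 + of_real(2 * a2) * v 0))"
      unfolding ipH_def int1_def int4_def xi psi by (simp add: algebra_simps)
    have VA': "VA = (- w1 L) * cnj (of_real (P L) * v1 L) - Fv * cnj (of_real (P 0) * v1 0)"
      unfolding VA_def PV_def using qL q0 by simp
    have VB': "VB = v L * cnj (of_real (P L) * w1 L) - v 0 * cnj (of_real (P 0) * w1 0)"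
      unfolding VB_def PW_def by simp
    have P00: "P 0 > 0" using Ppos L0 by simp
    have ht1: "\<theta>1 = -2 * a2 - a" unfolding a2_def using th t4 ths ab by (simp add: field_simps)
    have ht2: "\<theta>2 = 2 * a1 * P 0" unfolding a1_def using P00 by simp
    have ht3: "\<theta>3 = -2 * b * a2" unfolding a2_def using t4 ths ab by (simp add: field_simps)
    have ht4: "\<theta>4 = 2 * b * a1 * P 0" unfolding a1_def using t4 P00 by simp
    have hF: "Fv = of_real \<theta>1 * v 0 + of_real \<theta>2 * v1 0 + of_real \<theta>3 * w 0 + of_real \<theta>4 * w1 0"
      unfolding Fv_def Ffb_def ..
    have quad': "\<forall>v x y. -1/2 * v^2 + (b-a+1)/2 * x * v - b/2 * x^2 + \<gamma>/2 * (- (y^2) + ((b-a) * v - b * x) * y) \<le> (0::real)"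
      using quad g by blast
    have "Re (ipH L P a1 a2 \<gamma> (w, w1, q1, v, v1, \<xi>, \<psi>) (v, v1, p1, q1, q2, - w1 L, Fv)) \<le> 0"
      unfolding E0 IE VA' VB' by (rule final_alg[OF quad' ht1 ht2 ht3 ht4 hF])
    then show "Re (ipH L P (\<theta>2 / (2 * P 0)) (- \<theta>2 * \<theta>3 / (2 * \<theta>4)) \<gamma>
             (w, w1, q1, v, v1, \<xi>, \<psi>)
             (v, v1, p1, q1, q2, - w1 L, Ffb \<theta>1 \<theta>2 \<theta>3 \<theta>4 (v 0) (v1 0) (w 0) (w1 0))) \<le> 0"
      unfolding a1_def a2_def Fv_def .
  qed
qed


end
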